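(* Let $S=\{(x_1,x_2)\in\mathbb{R}^2:x_1\ge0,\ x_1^2-x_2^3\ge0\}$ and $G=\{X_1,X_1^2-X_2^3\}$. Then for every integer $k\ge1$, $\mathrm{TH}_k(G)=\overline{\Omega_k(G)}=\{(x_1,x_2)\in\mathbb{R}^2:x_1\ge0\}$ (for $k\ge2$ in the case of $\Omega_k$), whereas $\mathrm{conv}(S)=S\neq\{x_1\ge0\}$; hence neither hierarchy converges to $\overline{\mathrm{conv}(S)}$.
   Context: For a finite set $H=\{h_1,\dots,h_r\}\subseteq\mathbb{R}[X_1,X_2]$, $\mathcal{Q}_k(H)=\{\sum_{j=0}^r\sigma_jh_j:h_0=1,\ \sigma_j\text{ sums of squares},\ \deg(\sigma_jh_j)\le2k\}$. $\mathrm{TH}_k(G)=\{x:p(x)\ge0\ \forall p\in\mathcal{Q}_k(G)\text{ of degree}\le1\}$. For $y=(y_\alpha)_{\alpha\in\mathbb{N}^2,|\alpha|\le2k}$, $L_y(\sum q_\alpha X^\alpha)=\sum q_\alpha y_\alpha$, $M_k(y)=(y_{\alpha+\beta})_{|\alpha|,|\beta|\le k}$, and for $p=\sum_\beta p_\beta X^\beta$ with $d_p=\lceil\deg p/2\rceil$, $M_{k-d_p}(py)=(\sum_\beta p_\beta y_{\alpha+\gamma+\beta})_{|\alpha|,|\gamma|\le k-d_p}$. $\Omega_k(G)=\{x:\exists y,\ L_y(1)=1,\ L_y(X_i)=x_i,\ M_k(y)\succeq0,\ M_{k-1}(X_1y)\succeq0,\ M_{k-2}((X_1^2-X_2^3)y)\succeq0\}$.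 *)

theory Defs
  imports "HOL-Analysis.Analysis"
begin

text \<open>Real polynomials in two variables X1, X2, represented by their coefficient
  functions: p (a,b) is the coefficient of X1^a X2^b. A genuine polynomial is
  one with finite support.\<close>

type_synonym poly2 = "nat \<times> nat \<Rightarrow> real"

definition supp2 :: "poly2 \<Rightarrow> (nat \<times> nat) set" where
  "supp2 p = {\<alpha>. p \<alpha> \<noteq> 0}"

definition is_poly2 :: "poly2 \<Rightarrow> bool" where
  "is_poly2 p \<longleftrightarrow> finite (supp2 p)"

definition tdeg :: "nat \<times> nat \<Rightarrow> nat" where
  "tdeg \<alpha> = fst \<alpha> + snd \<alpha>"

text \<open>total degree (degree of the zero polynomial taken to be 0)\<close>
definition deg2 :: "poly2 \<Rightarrow> nat" where
  "deg2 p = (if supp2 p = {} then 0 else Max (tdeg ` supp2 p))"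

definition deg_le :: "poly2 \<Rightarrow> nat \<Rightarrow> bool" where
  "deg_le p d \<longleftrightarrow> (\<forall>\<alpha>. p \<alpha> \<noteq> 0 \<longrightarrow> tdeg \<alpha> \<le> d)"

definition const2 :: "real \<Rightarrow> poly2" where
  "const2 c = (\<lambda>\<alpha>. if \<alpha> = (0,0) then c else 0)"

definition pmul :: "poly2 \<Rightarrow> poly2 \<Rightarrow> poly2" where
  "pmul p q = (\<lambda>\<gamma>. \<Sum>i\<le>fst \<gamma>. \<Sum>j\<le>snd \<gamma>. p (i,j) * q (fst \<gamma> - i, snd \<gamma> - j))"

definition eval2 :: "poly2 \<Rightarrow> real \<times> real \<Rightarrow> real" where
  "eval2 p x = (\<Sum>\<alpha>\<in>supp2 p. p \<alpha> * fst x ^ fst \<alpha> * snd x ^ snd \<alpha>)"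

definition is_sos :: "poly2 \<Rightarrow> bool" where
  "is_sos \<sigma> \<longleftrightarrow> (\<exists>qs. (\<forall>q\<in>set qs. is_poly2 q) \<and> \<sigma> = (\<lambda>\<alpha>. \<Sum>q\<leftarrow>qs. pmul q q \<alpha>))"

definition Qmod :: "nat \<Rightarrow> poly2 list \<Rightarrow> poly2 set" where
  "Qmod k H = {(\<lambda>\<alpha>. \<Sum>j<length (const2 1 # H). pmul (\<sigma>s ! j) ((const2 1 # H) ! j) \<alpha>) | \<sigma>s.
      length \<sigma>s = length H + 1 \<and>
      (\<forall>j<length H + 1. is_sos (\<sigma>s ! j) \<and> deg_le (pmul (\<sigma>s ! j) ((const2 1 # H) ! j)) (2 * k))}"

definition TH :: "nat \<Rightarrow> poly2 list \<Rightarrow> (real \<times> real) set" where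
  "TH k H = {x. \<forall>p\<in>Qmod k H. deg_le p 1 \<longrightarrow> eval2 p x \<ge> 0}"

definition Ly :: "(nat \<times> nat \<Rightarrow> real) \<Rightarrow> poly2 \<Rightarrow> real" where
  "Ly y p = (\<Sum>\<alpha>\<in>supp2 p. p \<alpha> * y \<alpha>)"

definition psd_idx :: "nat \<Rightarrow> (nat \<times> nat \<Rightarrow> nat \<times> nat \<Rightarrow> real) \<Rightarrow> bool" where
  "psd_idx m A \<longleftrightarrow> (\<forall>v :: nat \<times> nat \<Rightarrow> real.
      (\<Sum>\<alpha>\<in>{\<alpha>. tdeg \<alpha> \<le> m}. \<Sum>\<gamma>\<in>{\<gamma>. tdeg \<gamma> \<le> m}. v \<alpha> * v \<gamma> * A \<alpha> \<gamma>) \<ge> 0)"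

definition moment_mat :: "(nat \<times> nat \<Rightarrow> real) \<Rightarrow> nat \<times> nat \<Rightarrow> nat \<times> nat \<Rightarrow> real" where
  "moment_mat y = (\<lambda>\<alpha> \<gamma>. y (\<alpha> + \<gamma>))"

definition loc_mat :: "poly2 \<Rightarrow> (nat \<times> nat \<Rightarrow> real) \<Rightarrow> nat \<times> nat \<Rightarrow> nat \<times> nat \<Rightarrow> real" where
  "loc_mat p y = (\<lambda>\<alpha> \<gamma>. \<Sum>\<beta>\<in>supp2 p. p \<beta> * y (\<alpha> + \<gamma> + \<beta>))"

definition dhalf :: "poly2 \<Rightarrow> nat" where
  "dhalf p = nat \<lceil>real (deg2 p) / 2\<rceil>"

definition Omega :: "nat \<Rightarrow> poly2 list \<Rightarrow> (real \<times> real) set" where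
  "Omega k G = {x. \<exists>y :: nat \<times> nat \<Rightarrow> real.
      Ly y (const2 1) = 1 \<and> y (1,0) = fst x \<and> y (0,1) = snd x \<and>
      psd_idx k (moment_mat y) \<and>
      (\<forall>p\<in>set G. psd_idx (k - dhalf p) (loc_mat p y))}"

definition X1 :: poly2 where
  "X1 = (\<lambda>\<alpha>. if \<alpha> = (1,0) then 1 else 0)"

definition cusp :: poly2 where
  "cusp = (\<lambda>\<alpha>. if \<alpha> = (2,0) then 1 else if \<alpha> = (0,3) then -1 else 0)"

definition Gcusp :: "poly2 list" where
  "Gcusp = [X1, cusp]"

definition Scusp :: "(real \<times> real) set" where
  "Scusp = {x. fst x \<ge> 0 \<and> fst x ^ 2 - snd x ^ 3 \<ge> 0}"

end

theory Submission
  imports Defs "HOL-Computational_Algebra.Fundamental_Theorem_Algebra"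
begin

definition mon :: "real \<times> real \<Rightarrow> nat \<times> nat \<Rightarrow> real" where
  "mon x \<alpha> = fst x ^ fst \<alpha> * snd x ^ snd \<alpha>"

definition box :: "nat \<Rightarrow> (nat \<times> nat) set" where
  "box N = {..N} \<times> {..N}"

lemma finite_box[simp]: "finite (box N)" by (simp add: box_def)

lemma eval2_superset:
  assumes "finite B" "supp2 p \<subseteq> B"
  shows "eval2 p x = (\<Sum>\<alpha>\<in>B. p \<alpha> * mon x \<alpha>)"
  unfolding eval2_def mon_def mult.assoc
  by (rule sum.mono_neutral_left) (use assms in \<open>auto simp: supp2_def\<close>)

lemma poly_in_box:
  assumes "is_poly2 p" shows "\<exists>N. supp2 p \<subseteq> box N"
proof -
  have fin: "finite (supp2 p)" using assms by (simp add: is_poly2_def)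
  define N where "N = Max (fst ` supp2 p \<union> snd ` supp2 p)"
  have "\<forall>\<alpha>\<in>supp2 p. fst \<alpha> \<le> N \<and> snd \<alpha> \<le> N"
    using fin unfolding N_def by (auto intro: Max_ge)
  thus ?thesis by (auto simp: box_def intro!: exI[of _ N])
qed

lemma box_mono: "N \<le> M \<Longrightarrow> box N \<subseteq> box M"
  by (auto simp: box_def)

lemma poly_add:
  assumes "is_poly2 p" "is_poly2 q"
  shows "is_poly2 (\<lambda>\<alpha>. p \<alpha> + q \<alpha>)" "eval2 (\<lambda>\<alpha>. p \<alpha> + q \<alpha>) x = eval2 p x + eval2 q x"
proof -
  have f: "finite (supp2 p \<union> supp2 q)" using assms by (simp add: is_poly2_def)
  have s: "supp2 (\<lambda>\<alpha>. p \<alpha> + q \<alpha>) \<subseteq> supp2 p \<union> supp2 q" by (auto simp: supp2_def)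
  show "is_poly2 (\<lambda>\<alpha>. p \<alpha> + q \<alpha>)" unfolding is_poly2_def using f s finite_subset by blast
  show "eval2 (\<lambda>\<alpha>. p \<alpha> + q \<alpha>) x = eval2 p x + eval2 q x"
    using eval2_superset[OF f s] eval2_superset[OF f, of p] eval2_superset[OF f, of q]
    by (simp add: sum.distrib distrib_right)
qed

lemma cauchy1:
  fixes F G :: "nat \<Rightarrow> real"
  assumes "\<And>j. j > N \<Longrightarrow> F j = 0" "\<And>j. j > N \<Longrightarrow> G j = 0"
  shows "(\<Sum>e\<le>2*N. (\<Sum>j\<le>e. F j * G (e - j)) * y ^ e) = (\<Sum>j\<le>N. F j * y ^ j) * (\<Sum>j\<le>N. G j * y ^ j)"
proof -
  have "(\<Sum>e\<le>2*N. (\<Sum>j\<le>e. F j * G (e - j)) * y ^ e) = (\<Sum>e\<le>2*N. \<Sum>j\<le>e. (F j * y^j) * (G (e - j) * y^(e-j)))"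
  proof (intro sum.cong refl)
    fix e j assume "e \<in> {..2*N}"
    show "(\<Sum>j\<le>e. F j * G (e - j)) * y ^ e = (\<Sum>j\<le>e. (F j * y^j) * (G (e - j) * y^(e-j)))"
      unfolding sum_distrib_right
    proof (intro sum.cong refl)
      fix j assume "j \<in> {..e}"
      then have "y ^ e = y^j * y^(e-j)" by (simp add: power_add[symmetric])
      then show "F j * G (e - j) * y ^ e = F j * y ^ j * (G (e - j) * y ^ (e - j))" by simp
    qed
  qed
  also have "\<dots> = (\<Sum>(i,j)\<in>{(i,j). i+j \<le> 2*N}. (F i * y^i) * (G j * y^j))"
    by (rule sum.triangle_reindex_eq[symmetric])
  also have "\<dots> = (\<Sum>(i,j)\<in>{..N}\<times>{..N}. (F i * y^i) * (G j * y^j))"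
  proof (rule sum.mono_neutral_right)
    show "finite {(i,j). i+j \<le> 2*N}"
      by (rule finite_subset[of _ "{..2*N}\<times>{..2*N}"]) auto
    have F': "F j \<noteq> 0 \<Longrightarrow> j \<le> N" for j using assms(1)[of j] by (metis not_le)
    have G': "G j \<noteq> 0 \<Longrightarrow> j \<le> N" for j using assms(2)[of j] by (metis not_le)
    show "\<forall>i\<in>{(i,j). i+j \<le> 2*N} - {..N}\<times>{..N}. (case i of (i,j) \<Rightarrow> (F i * y^i) * (G j * y^j)) = 0"
      using F' G' by fastforce
  qed auto
  also have "\<dots> = (\<Sum>j\<le>N. F j * y ^ j) * (\<Sum>j\<le>N. G j * y ^ j)"
    by (simp add: sum_product sum.cartesian_product)
  finally show ?thesis .
qed

lemma pmul_poly:
  assumes "is_poly2 p" "is_poly2 q"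
  shows "is_poly2 (pmul p q)" "eval2 (pmul p q) x = eval2 p x * eval2 q x"
proof -
  obtain N1 N2 where "supp2 p \<subseteq> box N1" "supp2 q \<subseteq> box N2"
    using poly_in_box assms by metis
  then have sp: "supp2 p \<subseteq> box (max N1 N2)" and sq: "supp2 q \<subseteq> box (max N1 N2)"
    using box_mono[of N1 "max N1 N2"] box_mono[of N2 "max N1 N2"] by auto
  define N where "N = max N1 N2"
  have p0: "p (i,j) = 0" if "i > N \<or> j > N" for i j
    using sp that unfolding N_def by (auto simp: supp2_def box_def)
  have q0: "q (i,j) = 0" if "i > N \<or> j > N" for i j
    using sq that unfolding N_def by (auto simp: supp2_def box_def)
  have m0: "pmul p q (c,e) = 0" if "c > 2*N \<or> e > 2*N" for c e
  proof -
    have "p (i,j) * q (c-i,e-j) = 0" if "i \<le> c" "j \<le> e" for i j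
    proof (cases "i > N \<or> j > N")
      case True then show ?thesis using p0 by simp
    next
      case False then have "c - i > N \<or> e - j > N" using \<open>c > 2*N \<or> e > 2*N\<close> by auto
      then show ?thesis using q0 by simp
    qed
    then show ?thesis unfolding pmul_def by (auto intro!: sum.neutral)
  qed
  have sm: "supp2 (pmul p q) \<subseteq> box (2*N)"
  proof (clarsimp simp: supp2_def box_def)
    fix c e assume "pmul p q (c,e) \<noteq> 0"
    then show "c \<le> 2*N \<and> e \<le> 2*N"
    proof (rule contrapos_np)
      assume "\<not> (c \<le> 2*N \<and> e \<le> 2*N)"
      then have "c > 2*N \<or> e > 2*N" by auto
      then show "pmul p q (c,e) = 0" by (rule m0)
    qed
  qed
  then show "is_poly2 (pmul p q)" unfolding is_poly2_def by (rule finite_subset[OF _ finite_box])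
  have "eval2 (pmul p q) x = (\<Sum>c\<le>2*N. \<Sum>e\<le>2*N. pmul p q (c,e) * mon x (c,e))"
    by (subst eval2_superset[OF finite_box sm]) (simp add: box_def sum.cartesian_product)
  also have "\<dots> = (\<Sum>c\<le>2*N. (\<Sum>i\<le>c. (\<Sum>j\<le>N. p (i,j) * snd x ^ j) * (\<Sum>j\<le>N. q (c-i,j) * snd x ^ j)) * fst x ^ c)"
  proof (intro sum.cong refl)
    fix c assume "c \<in> {..2*N}"
    have "(\<Sum>e\<le>2*N. pmul p q (c,e) * mon x (c,e)) = (\<Sum>e\<le>2*N. (\<Sum>i\<le>c. (\<Sum>j\<le>e. p (i,j) * q (c-i,e-j)) * snd x ^ e)) * fst x ^ c"
    proof -
      have "(\<Sum>e\<le>2*N. pmul p q (c,e) * mon x (c,e)) = (\<Sum>e\<le>2*N. (\<Sum>i\<le>c. (\<Sum>j\<le>e. p (i,j) * q (c-i,e-j))) * snd x ^ e * fst x ^ c)"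
        by (intro sum.cong refl) (simp add: pmul_def mon_def)
      also have "\<dots> = (\<Sum>e\<le>2*N. (\<Sum>i\<le>c. (\<Sum>j\<le>e. p (i,j) * q (c-i,e-j)) * snd x ^ e)) * fst x ^ c"
        by (simp only: sum_distrib_right)
      finally show ?thesis .
    qed
    also have "\<dots> = (\<Sum>i\<le>c. (\<Sum>e\<le>2*N. (\<Sum>j\<le>e. p (i,j) * q (c-i,e-j)) * snd x ^ e)) * fst x ^ c"
      by (subst sum.swap) simp
    also have "\<dots> = (\<Sum>i\<le>c. (\<Sum>j\<le>N. p (i,j) * snd x ^ j) * (\<Sum>j\<le>N. q (c-i,j) * snd x ^ j)) * fst x ^ c"
      by (intro arg_cong2[where f="(*)"] sum.cong refl cauchy1) (auto simp: p0 q0)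
    finally show "(\<Sum>e\<le>2*N. pmul p q (c,e) * mon x (c,e)) = \<dots>" .
  qed
  also have "\<dots> = (\<Sum>i\<le>N. (\<Sum>j\<le>N. p (i,j) * snd x ^ j) * fst x ^ i) * (\<Sum>i\<le>N. (\<Sum>j\<le>N. q (i,j) * snd x ^ j) * fst x ^ i)"
    by (rule cauchy1) (auto simp: p0 q0)
  also have "\<dots> = eval2 p x * eval2 q x"
  proof -
    have e: "eval2 r x = (\<Sum>i\<le>N. (\<Sum>j\<le>N. r (i,j) * snd x ^ j) * fst x ^ i)" if "supp2 r \<subseteq> box N" for r
    proof -
      have "eval2 r x = (\<Sum>i\<le>N. \<Sum>j\<le>N. r (i,j) * mon x (i,j))"
        by (subst eval2_superset[OF finite_box that]) (simp add: box_def sum.cartesian_product)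
      also have "\<dots> = (\<Sum>i\<le>N. \<Sum>j\<le>N. r (i,j) * snd x ^ j * fst x ^ i)"
        by (intro sum.cong refl) (simp add: mon_def mult_ac)
      finally show ?thesis by (simp only: sum_distrib_right)
    qed
    show ?thesis using e[OF sp[folded N_def]] e[OF sq[folded N_def]] by simp
  qed
  finally show "eval2 (pmul p q) x = eval2 p x * eval2 q x" .
qed


lemma supp_const2: "c \<noteq> 0 \<Longrightarrow> supp2 (const2 c) = {(0,0)}"
  by (auto simp: supp2_def const2_def)
lemma supp_X1: "supp2 X1 = {(1,0)}"
  by (auto simp: supp2_def X1_def)
lemma supp_cusp: "supp2 cusp = {(2,0),(0,3)}"
  by (auto simp: supp2_def cusp_def)

lemma poly_const2: "is_poly2 (const2 c)"
  by (cases "c = 0") (auto simp: is_poly2_def supp_const2, simp add: supp2_def const2_def)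
lemma poly_X1: "is_poly2 X1" by (simp add: is_poly2_def supp_X1)
lemma poly_cusp: "is_poly2 cusp" by (simp add: is_poly2_def supp_cusp)
lemma poly_zero: "is_poly2 (\<lambda>_. 0)" by (simp add: is_poly2_def supp2_def)

lemma eval_const2: "eval2 (const2 c) x = c"
  by (cases "c = 0") (auto simp: eval2_def supp_const2 const2_def supp2_def)
lemma eval_X1: "eval2 X1 x = fst x"
  unfolding eval2_def supp_X1 by (simp add: X1_def)
lemma eval_cusp: "eval2 cusp x = fst x ^ 2 - snd x ^ 3"
  unfolding eval2_def supp_cusp by (simp add: cusp_def)

lemma pmul_const2: "pmul (const2 c) q = (\<lambda>\<alpha>. c * q \<alpha>)"
proof
  fix \<gamma> :: "nat \<times> nat"
  have "pmul (const2 c) q \<gamma> = (\<Sum>i\<le>fst \<gamma>. \<Sum>j\<le>snd \<gamma>. (if i = 0 then (if j = 0 then c * q (fst \<gamma> - i, snd \<gamma> - j) else 0) else 0))"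
    unfolding pmul_def const2_def by (intro sum.cong refl) auto
  also have "\<dots> = (\<Sum>i\<le>fst \<gamma>. if i = 0 then (\<Sum>j\<le>snd \<gamma>. if j = 0 then c * q (fst \<gamma> - i, snd \<gamma> - j) else 0) else 0)"
    by (intro sum.cong refl) auto
  also have "\<dots> = c * q \<gamma>"
    by (simp add: sum.delta)
  finally show "pmul (const2 c) q \<gamma> = c * q \<gamma>" .
qed

lemma pmul_zero: "pmul (\<lambda>_. 0) q = (\<lambda>_. 0)"
  by (simp add: pmul_def)

lemma sos_props:
  assumes "is_sos \<sigma>" shows "is_poly2 \<sigma>" "eval2 \<sigma> x \<ge> 0"
proof -
  obtain qs where qs: "\<forall>q\<in>set qs. is_poly2 q" "\<sigma> = (\<lambda>\<alpha>. \<Sum>q\<leftarrow>qs. pmul q q \<alpha>)"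
    using assms unfolding is_sos_def by blast
  have "is_poly2 (\<lambda>\<alpha>. \<Sum>q\<leftarrow>qs. pmul q q \<alpha>) \<and> (\<forall>x. eval2 (\<lambda>\<alpha>. \<Sum>q\<leftarrow>qs. pmul q q \<alpha>) x \<ge> 0)"
    using qs(1)
  proof (induction qs)
    case Nil
    then show ?case using poly_zero by (simp add: eval2_def supp2_def)
  next
    case (Cons q qs)
    have pq: "is_poly2 q" using Cons by simp
    have e: "(\<lambda>\<alpha>. \<Sum>q'\<leftarrow>q#qs. pmul q' q' \<alpha>) = (\<lambda>\<alpha>. pmul q q \<alpha> + (\<Sum>q'\<leftarrow>qs. pmul q' q' \<alpha>))"
      by simp
    have IH: "is_poly2 (\<lambda>\<alpha>. \<Sum>q\<leftarrow>qs. pmul q q \<alpha>)" "\<And>x. eval2 (\<lambda>\<alpha>. \<Sum>q\<leftarrow>qs. pmul q q \<alpha>) x \<ge> 0"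
      using Cons by auto
    have pp: "is_poly2 (\<lambda>\<alpha>. pmul q q \<alpha>)" using pmul_poly[OF pq pq] by simp
    show ?case unfolding e
      using poly_add[OF pp IH(1)] IH(2) pmul_poly[OF pq pq]
      by (simp add: eta_contract_eq)
  qed
  then show "is_poly2 \<sigma>" "eval2 \<sigma> x \<ge> 0" using qs(2) by blast+
qed


lemma poly_pos_growth:
  fixes P :: "real poly"
  assumes nn: "\<And>t. poly P t \<ge> 0" and nz: "P \<noteq> 0"
  shows "\<exists>r d. d > 0 \<and> (\<forall>t. t \<le> -r \<longrightarrow> poly P t \<ge> d)"
proof (cases "degree P = 0")
  case True
  then obtain c0 where P: "P = [:c0:]" by (metis degree_eq_zeroE)
  then have "c0 > 0" using nn[of 0] nz by fastforce
  then show ?thesis using P by (intro exI[of _ 0] exI[of _ c0]) auto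
next
  case False
  obtain a Q where PQ: "P = pCons a Q" by (cases P) auto
  then have "Q \<noteq> 0" using False by auto
  from poly_infinity[OF this, of 1 a] obtain r where r: "\<And>z. r \<le> norm z \<Longrightarrow> 1 \<le> norm (poly (pCons a Q) z)"
    by blast
  have "\<forall>t. t \<le> - \<bar>r\<bar> \<longrightarrow> 1 \<le> poly P t"
  proof (intro allI impI)
    fix t :: real assume "t \<le> - \<bar>r\<bar>"
    then have "r \<le> norm t" by auto
    then have "1 \<le> \<bar>poly P t\<bar>" using r PQ by auto
    then show "1 \<le> poly P t" using nn[of t] by auto
  qed
  then show ?thesis by (intro exI[of _ "\<bar>r\<bar>"] exI[of _ "1::real"]) auto
qed

lemma eval_line:
  assumes "is_poly2 \<sigma>"
  shows "\<exists>P :: real poly. \<forall>t. eval2 \<sigma> (0,t) = poly P t"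
proof -
  define P where "P = (\<Sum>\<alpha>\<in>supp2 \<sigma>. monom (\<sigma> \<alpha> * 0 ^ fst \<alpha>) (snd \<alpha>))"
  have "eval2 \<sigma> (0,t) = poly P t" for t
    unfolding P_def eval2_def by (simp add: poly_sum poly_monom)
  then show ?thesis by blast
qed

lemma sum3: "(\<Sum>j<(3::nat). f j) = f 0 + f 1 + (f 2 :: real)"
  by (simp add: numeral_3_eq_3 numeral_2_eq_2 lessThan_Suc)

lemma Qmod_cusp:
  assumes "p \<in> Qmod k Gcusp"
  shows "is_poly2 p \<and> (\<exists>g0 g1 g2. (\<forall>z. g0 z \<ge> 0 \<and> g1 z \<ge> 0 \<and> g2 z \<ge> 0) \<and>
          (\<exists>P::real poly. \<forall>t. g2 (0,t) = poly P t) \<and>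
          (\<forall>z. eval2 p z = g0 z + g1 z * fst z + g2 z * (fst z ^ 2 - snd z ^ 3)))"
proof -
  obtain \<sigma>s where p: "p = (\<lambda>\<alpha>. \<Sum>j<length (const2 1 # Gcusp). pmul (\<sigma>s ! j) ((const2 1 # Gcusp) ! j) \<alpha>)"
    and l: "length \<sigma>s = length Gcusp + 1"
    and s: "\<forall>j<length Gcusp + 1. is_sos (\<sigma>s ! j)"
    using assms unfolding Qmod_def by blast
  have s0: "is_sos (\<sigma>s!0)" and s1: "is_sos (\<sigma>s!1)" and s2: "is_sos (\<sigma>s!2)"
    using s by (auto simp: Gcusp_def)
  note P0 = sos_props[OF s0] and P1 = sos_props[OF s1] and P2 = sos_props[OF s2]
  have pe: "p = (\<lambda>\<alpha>. pmul (\<sigma>s!0) (const2 1) \<alpha> + pmul (\<sigma>s!1) X1 \<alpha> + pmul (\<sigma>s!2) cusp \<alpha>)"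
    unfolding p by (simp add: Gcusp_def sum3 numeral_2_eq_2)
  have a0: "is_poly2 (\<lambda>\<alpha>. pmul (\<sigma>s!0) (const2 1) \<alpha>)" using pmul_poly(1)[OF P0(1) poly_const2] by simp
  have a1: "is_poly2 (\<lambda>\<alpha>. pmul (\<sigma>s!1) X1 \<alpha>)" using pmul_poly(1)[OF P1(1) poly_X1] by simp
  have a2: "is_poly2 (\<lambda>\<alpha>. pmul (\<sigma>s!2) cusp \<alpha>)" using pmul_poly(1)[OF P2(1) poly_cusp] by simp
  have a01: "is_poly2 (\<lambda>\<alpha>. pmul (\<sigma>s!0) (const2 1) \<alpha> + pmul (\<sigma>s!1) X1 \<alpha>)"
    using poly_add(1)[OF a0 a1] .
  have "is_poly2 p" unfolding pe using poly_add(1)[OF a01 a2] .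
  moreover have "eval2 p z = eval2 (\<sigma>s!0) z + eval2 (\<sigma>s!1) z * fst z + eval2 (\<sigma>s!2) z * (fst z ^ 2 - snd z ^ 3)" for z
    unfolding pe poly_add(2)[OF a01 a2] poly_add(2)[OF a0 a1]
    using pmul_poly(2)[OF P0(1) poly_const2] pmul_poly(2)[OF P1(1) poly_X1] pmul_poly(2)[OF P2(1) poly_cusp]
    by (simp add: eval_const2 eval_X1 eval_cusp eta_contract_eq)
  moreover obtain P where "\<forall>t. eval2 (\<sigma>s!2) (0,t) = poly P t" using eval_line[OF P2(1)] by blast
  ultimately show ?thesis using P0(2) P1(2) P2(2)
    by (intro conjI exI[of _ "eval2 (\<sigma>s!0)"] exI[of _ "eval2 (\<sigma>s!1)"] exI[of _ "eval2 (\<sigma>s!2)"]) auto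
qed

lemma deg1_eval:
  assumes "is_poly2 p" "deg_le p 1"
  shows "eval2 p z = p (0,0) + p (1,0) * fst z + p (0,1) * snd z"
proof -
  have "supp2 p \<subseteq> {(0,0),(1,0),(0,1)}"
  proof
    fix \<alpha> assume "\<alpha> \<in> supp2 p"
    then have "tdeg \<alpha> \<le> 1" using assms(2) unfolding deg_le_def supp2_def by blast
    then show "\<alpha> \<in> {(0,0),(1,0),(0,1)}" by (cases \<alpha>) (auto simp: tdeg_def)
  qed
  from eval2_superset[OF _ this] show ?thesis by (simp add: mon_def)
qed

lemma TH_main:
  assumes "p \<in> Qmod k Gcusp" "deg_le p 1" "fst x \<ge> 0"
  shows "eval2 p x \<ge> 0"
proof -
  obtain g0 g1 g2 P where pp: "is_poly2 p" and g: "\<And>z. g0 z \<ge> 0" "\<And>z. g1 z \<ge> 0" "\<And>z. g2 z \<ge> 0"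
    and P: "\<And>t. g2 (0,t) = poly P t"
    and e: "\<And>z. eval2 p z = g0 z + g1 z * fst z + g2 z * (fst z ^ 2 - snd z ^ 3)"
    using Qmod_cusp[OF assms(1)] by metis
  define a where "a = p (0,0)"
  define b where "b = p (1,0)"
  define c where "c = p (0,1)"
  have H: "a + b * s + c * t = g0 (s,t) + g1 (s,t) * s + g2 (s,t) * (s ^ 2 - t ^ 3)" for s t
    using e[of "(s,t)"] deg1_eval[OF pp assms(2), of "(s,t)"] by (simp add: a_def b_def c_def)
  have a0: "a \<ge> 0" using H[of 0 0] g(1)[of "(0,0)"] by simp
  have neg: "a + c * t \<ge> g2 (0,t) * (-(t ^ 3))" for t
    using H[of 0 t] g(1)[of "(0,t)"] by simp
  have negt: "a + c * t \<ge> 0" if "t \<le> 0" for t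
  proof -
    have "t * t * t \<le> 0" using that by (metis mult_nonneg_nonpos zero_le_square)
    then have "-(t ^ 3) \<ge> 0" by (simp add: power3_eq_cube)
    then have "g2 (0,t) * (-(t^3)) \<ge> 0" using g(3)[of "(0,t)"] by (rule mult_nonneg_nonneg[rotated])
    then show ?thesis using neg[of t] by linarith
  qed
  have c_le: "c \<le> 0"
  proof (rule ccontr)
    assume "\<not> c \<le> 0"
    then have "c > 0" by simp
    then have "a + c * (-(a+1)/c) \<ge> 0" using negt[of "-(a+1)/c"] a0 by (simp add: divide_nonpos_pos)
    then show False using \<open>c > 0\<close> by (simp add: field_simps)
  qed
  have c0: "c = 0"
  proof (rule ccontr)
    assume "c \<noteq> 0"
    then have cn: "c < 0" using c_le by simp
    show False
    proof (cases "P = 0")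
      case True
      then have "a + c * t \<ge> 0" for t using H[of 0 t] g(1)[of "(0,t)"] P[of t] by simp
      from this[of "(a+1)/(-c)"] cn show False by (simp add: field_simps)
    next
      case False
      from poly_pos_growth[OF _ False] P g(3) obtain r d where rd: "d > 0" "\<And>t. t \<le> -r \<Longrightarrow> poly P t \<ge> d"
        by metis
      define T where "T = max r 1 + (a - c) / d + 1"
      have T1: "T \<ge> 1" and Tr: "-T \<le> -r" and Td: "d * T > a - c"
      proof -
        have q: "(a - c)/d \<ge> 0" using rd(1) a0 cn by simp
        have m: "max r 1 \<ge> 1" "max r 1 \<ge> r" by auto
        show "T \<ge> 1" "-T \<le> -r" unfolding T_def using q m by linarith+
        have "d * T = d * max r 1 + (a - c) + d" unfolding T_def using rd(1) by (simp add: field_simps)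
        moreover have "d * max r 1 \<ge> 0" using rd(1) m by simp
        ultimately show "d * T > a - c" using rd(1) by linarith
      qed
      have "g2 (0,-T) \<ge> d" using rd(2)[OF Tr] P by simp
      then have "g2 (0,-T) * T^3 \<ge> d * T^3" by (rule mult_right_mono) (use T1 in auto)
      moreover have "-((-T)^3) = T^3" by simp
      ultimately have A: "a - c * T \<ge> d * T ^ 3" using neg[of "-T"] by simp
      have "(a - c) * T ^ 2 < (d * T) * T^2" by (rule mult_strict_right_mono[OF Td]) (use T1 in auto)
      then have B: "d * T ^ 3 > (a - c) * T ^ 2" by (simp add: power2_eq_square power3_eq_cube mult_ac)
      have T2': "T^2 \<ge> T" using T1 mult_right_mono[OF T1, of T] by (simp add: power2_eq_square)
      have T2: "T^2 \<ge> 1" "T^2 \<ge> T" using T1 T2' by linarith+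
      have "a * 1 \<le> a * T^2" by (rule mult_left_mono[OF T2(1) a0])
      moreover have "(-c) * T \<le> (-c) * T^2" by (rule mult_left_mono[OF T2(2)]) (use cn in auto)
      ultimately have C: "(a - c) * T ^ 2 \<ge> a - c * T" by (simp add: algebra_simps)
      from A B C show False by linarith
    qed
  qed
  have b0: "b \<ge> 0"
  proof (rule ccontr)
    assume "\<not> b \<ge> 0"
    then have bn: "b < 0" by simp
    define s where "s = (a+1)/(-b)"
    have s0: "s \<ge> 0" using a0 bn unfolding s_def by (intro divide_nonneg_pos) auto
    have "a + b * s \<ge> 0" using H[of s 0] g(1)[of "(s,0)"] g(2)[of "(s,0)"] g(3)[of "(s,0)"] s0
      by (simp add: power2_eq_square)
    then show False using bn by (simp add: s_def field_simps)
  qed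
  show ?thesis using deg1_eval[OF pp assms(2), of x] a0 b0 c0 assms(3)
    unfolding a_def b_def c_def by simp
qed


lemma X1_in_Qmod:
  assumes "k \<ge> 1" shows "X1 \<in> Qmod k Gcusp"
proof -
  define Z :: poly2 where "Z = (\<lambda>_. 0)"
  have sZ: "is_sos Z" unfolding is_sos_def Z_def by (intro exI[of _ "[]"]) simp
  have s1: "is_sos (const2 1)" unfolding is_sos_def
    by (intro exI[of _ "[const2 1]"]) (simp add: poly_const2 pmul_const2)
  have dX: "deg_le X1 (2*k)" using assms by (auto simp: deg_le_def X1_def tdeg_def)
  have e: "X1 = (\<lambda>\<alpha>. \<Sum>j<length (const2 1 # Gcusp). pmul ([Z, const2 1, Z] ! j) ((const2 1 # Gcusp) ! j) \<alpha>)"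
    by (simp add: Gcusp_def sum3 Z_def pmul_zero pmul_const2 numeral_2_eq_2)
  have c: "\<forall>j<length Gcusp + 1. is_sos ([Z, const2 1, Z] ! j) \<and> deg_le (pmul ([Z, const2 1, Z] ! j) ((const2 1 # Gcusp) ! j)) (2 * k)"
  proof (intro allI impI)
    fix j assume "j < length Gcusp + 1"
    then have "j = 0 \<or> j = 1 \<or> j = 2" by (auto simp: Gcusp_def)
    then show "is_sos ([Z, const2 1, Z] ! j) \<and> deg_le (pmul ([Z, const2 1, Z] ! j) ((const2 1 # Gcusp) ! j)) (2 * k)"
      using sZ s1 dX by (auto simp: Z_def pmul_zero pmul_const2 deg_le_def Gcusp_def)
  qed
  show ?thesis unfolding Qmod_def using e c by (intro CollectI exI[of _ "[Z, const2 1, Z]"]) (auto simp: Gcusp_def)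
qed

lemma TH_part:
  assumes "k \<ge> 1" shows "TH k Gcusp = {x. fst x \<ge> 0}"
proof
  show "TH k Gcusp \<subseteq> {x. fst x \<ge> 0}"
  proof
    fix x assume "x \<in> TH k Gcusp"
    moreover have "deg_le X1 1" by (auto simp: deg_le_def X1_def tdeg_def)
    ultimately have "eval2 X1 x \<ge> 0" using X1_in_Qmod[OF assms] unfolding TH_def by blast
    then show "x \<in> {x. fst x \<ge> 0}" by (simp add: eval_X1)
  qed
  show "{x. fst x \<ge> 0} \<subseteq> TH k Gcusp"
    unfolding TH_def using TH_main by blast
qed


lemma pm_ineq:
  fixes u v A B :: real
  assumes "u \<ge> 0" "v \<ge> 0" "u + v = 1" "A \<ge> 0" "B \<ge> 0"
  shows "(u * A^2 + v * B^2)^3 \<le> (u * A^3 + v * B^3)^2"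
proof -
  have v: "v = 1 - u" using assms(3) by simp
  have eq: "(u * A^3 + v * B^3)^2 - (u * A^2 + v * B^2)^3 = u * v * (A-B)^2 * (u * A^3 * (A+2 * B) + v * B^3 * (B+2 * A))"
    unfolding v by (simp add: algebra_simps power2_eq_square power3_eq_cube)
  have "u * v * (A-B)^2 * (u * A^3 * (A+2 * B) + v * B^3 * (B+2 * A)) \<ge> 0"
    using assms by (intro mult_nonneg_nonneg add_nonneg_nonneg) auto
  then show ?thesis using eq by linarith
qed

lemma cusp_le:
  fixes x1 x2 :: real
  assumes "x1 \<ge> 0" "x2^3 \<le> x1^2"
  shows "x2 \<le> (root 3 x1)^2"
proof -
  have "(root 3 x1)^3 = x1" using assms by simp
  then have "x2 ^ Suc 2 \<le> ((root 3 x1)^2) ^ Suc 2" using assms(2)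
    by (metis numeral_3_eq_3 numeral_2_eq_2 power_mult mult.commute)
  then show ?thesis by (rule power_le_imp_le_base) simp
qed

lemma convex_Scusp: "convex Scusp"
proof (rule convexI)
  fix x y :: "real \<times> real" and u v :: real
  assume xs: "x \<in> Scusp" and ys: "y \<in> Scusp" and u: "0 \<le> u" and v: "0 \<le> v" and uv: "u + v = 1"
  define A where "A = root 3 (fst x)"
  define B where "B = root 3 (fst y)"
  have x1: "fst x \<ge> 0" "snd x ^ 3 \<le> fst x ^ 2" using xs by (auto simp: Scusp_def)
  have y1: "fst y \<ge> 0" "snd y ^ 3 \<le> fst y ^ 2" using ys by (auto simp: Scusp_def)
  have A0: "A \<ge> 0" "A^3 = fst x" using x1 by (auto simp: A_def)
  have B0: "B \<ge> 0" "B^3 = fst y" using y1 by (auto simp: B_def)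
  have xa: "snd x \<le> A^2" unfolding A_def by (rule cusp_le[OF x1])
  have yb: "snd y \<le> B^2" unfolding B_def by (rule cusp_le[OF y1])
  have z2: "u * snd x + v * snd y \<le> u * A^2 + v * B^2"
    using mult_left_mono[OF xa u] mult_left_mono[OF yb v] by linarith
  have "(u * snd x + v * snd y)^3 \<le> (u * A^2 + v * B^2)^3"
    by (rule power_mono_odd[OF _ z2]) simp
  also have "\<dots> \<le> (u * A^3 + v * B^3)^2" by (rule pm_ineq) (use u v uv A0 B0 in auto)
  finally have "(u * snd x + v * snd y)^3 \<le> (u * fst x + v * fst y)^2" using A0 B0 by simp
  moreover have "u * fst x + v * fst y \<ge> 0" using u v x1 y1 by simp
  ultimately show "u *\<^sub>R x + v *\<^sub>R y \<in> Scusp" by (simp add: Scusp_def)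
qed

lemma hull_part: "convex hull Scusp = Scusp"
  using convex_Scusp by (simp add: convex_hull_eq)

lemma neq_part: "Scusp \<noteq> {x. fst x \<ge> 0}"
proof
  assume "Scusp = {x. fst x \<ge> 0}"
  moreover have "(0::real, 1::real) \<in> {x. fst x \<ge> 0}" by simp
  ultimately have "(0::real, 1::real) \<in> Scusp" by simp
  then show False by (simp add: Scusp_def)
qed


lemma finite_tdeg: "finite {\<alpha> :: nat \<times> nat. tdeg \<alpha> \<le> m}"
  by (rule finite_subset[of _ "{..m} \<times> {..m}"]) (auto simp: tdeg_def)

lemma mon_add: "mon z (\<alpha> + \<gamma>) = mon z \<alpha> * mon z \<gamma>"
  by (simp add: mon_def power_add)

lemma dhalf_X1: "dhalf X1 = 1"
proof -
  have "\<lceil>(1::real)/2\<rceil> = 1" by (simp add: ceiling_eq_iff)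
  then show ?thesis by (simp add: dhalf_def deg2_def supp_X1 tdeg_def)
qed

lemma dhalf_cusp: "dhalf cusp = 2"
proof -
  have "\<lceil>(3::real)/2\<rceil> = 2" by (simp add: ceiling_eq_iff)
  then show ?thesis by (simp add: dhalf_def deg2_def supp_cusp tdeg_def)
qed

lemma Omega_sub:
  assumes "k \<ge> 1" shows "Omega k Gcusp \<subseteq> {x. fst x \<ge> 0}"
proof
  fix x assume "x \<in> Omega k Gcusp"
  then obtain y where y1: "y (1,0) = fst x" and ps: "psd_idx (k - dhalf X1) (loc_mat X1 y)"
    unfolding Omega_def Gcusp_def by auto
  define m where "m = k - dhalf X1"
  define v :: "nat \<times> nat \<Rightarrow> real" where "v = (\<lambda>\<alpha>. if \<alpha> = (0,0) then 1 else 0)"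
  have "0 \<le> (\<Sum>\<alpha>\<in>{\<alpha>. tdeg \<alpha> \<le> m}. \<Sum>\<gamma>\<in>{\<gamma>. tdeg \<gamma> \<le> m}. v \<alpha> * v \<gamma> * loc_mat X1 y \<alpha> \<gamma>)"
    using ps unfolding psd_idx_def m_def by blast
  also have "\<dots> = (\<Sum>\<alpha>\<in>{\<alpha>. tdeg \<alpha> \<le> m}. if \<alpha> = (0,0) then (\<Sum>\<gamma>\<in>{\<gamma>. tdeg \<gamma> \<le> m}. if \<gamma> = (0,0) then loc_mat X1 y \<alpha> \<gamma> else 0) else 0)"
    by (intro sum.cong refl) (auto simp: v_def intro!: sum.cong)
  also have "\<dots> = loc_mat X1 y (0,0) (0,0)"
    by (simp only: sum.delta[OF finite_tdeg]) (simp add: tdeg_def)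
  also have "\<dots> = y (1,0)"
    unfolding loc_mat_def supp_X1 by (simp add: X1_def)
  finally show "x \<in> {x. fst x \<ge> 0}" using y1 by simp
qed

lemma moment_atoms:
  "moment_mat (\<lambda>\<alpha>. \<Sum>i\<in>I. w i * mon (z i) \<alpha>) \<alpha> \<gamma> = (\<Sum>i\<in>I. w i * 1 * mon (z i) \<alpha> * mon (z i) \<gamma>)"
  by (simp add: moment_mat_def mon_add mult_ac)

lemma loc_atoms:
  "loc_mat p (\<lambda>\<alpha>. \<Sum>i\<in>I. w i * mon (z i) \<alpha>) \<alpha> \<gamma> = (\<Sum>i\<in>I. w i * eval2 p (z i) * mon (z i) \<alpha> * mon (z i) \<gamma>)"
proof -
  have "loc_mat p (\<lambda>\<alpha>. \<Sum>i\<in>I. w i * mon (z i) \<alpha>) \<alpha> \<gamma> = (\<Sum>\<beta>\<in>supp2 p. \<Sum>i\<in>I. p \<beta> * (w i * (mon (z i) \<alpha> * mon (z i) \<gamma> * mon (z i) \<beta>)))"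
    by (simp add: loc_mat_def mon_add sum_distrib_left)
  also have "\<dots> = (\<Sum>i\<in>I. \<Sum>\<beta>\<in>supp2 p. w i * (p \<beta> * mon (z i) \<beta>) * mon (z i) \<alpha> * mon (z i) \<gamma>)"
    by (subst sum.swap) (simp add: mult_ac)
  also have "\<dots> = (\<Sum>i\<in>I. w i * eval2 p (z i) * mon (z i) \<alpha> * mon (z i) \<gamma>)"
    by (simp add: eval2_def mon_def sum_distrib_left sum_distrib_right mult_ac)
  finally show ?thesis .
qed

lemma form_atoms:
  "(\<Sum>\<alpha>\<in>A. \<Sum>\<gamma>\<in>A. v \<alpha> * v \<gamma> * (\<Sum>i\<in>I. w i * g i * mon (z i) \<alpha> * mon (z i) \<gamma>))
   = (\<Sum>i\<in>I. w i * g i * (\<Sum>\<alpha>\<in>A. v \<alpha> * mon (z i) \<alpha>)^2)"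
proof -
  have "(\<Sum>\<alpha>\<in>A. \<Sum>\<gamma>\<in>A. v \<alpha> * v \<gamma> * (\<Sum>i\<in>I. w i * g i * mon (z i) \<alpha> * mon (z i) \<gamma>))
     = (\<Sum>\<alpha>\<in>A. \<Sum>\<gamma>\<in>A. \<Sum>i\<in>I. w i * g i * ((v \<alpha> * mon (z i) \<alpha>) * (v \<gamma> * mon (z i) \<gamma>)))"
    by (simp add: sum_distrib_left mult_ac)
  also have "\<dots> = (\<Sum>\<alpha>\<in>A. \<Sum>i\<in>I. \<Sum>\<gamma>\<in>A. w i * g i * ((v \<alpha> * mon (z i) \<alpha>) * (v \<gamma> * mon (z i) \<gamma>)))"
    by (subst sum.swap) simp
  also have "\<dots> = (\<Sum>i\<in>I. \<Sum>\<alpha>\<in>A. \<Sum>\<gamma>\<in>A. w i * g i * ((v \<alpha> * mon (z i) \<alpha>) * (v \<gamma> * mon (z i) \<gamma>)))"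
    by (rule sum.swap)
  also have "\<dots> = (\<Sum>i\<in>I. w i * g i * (\<Sum>\<alpha>\<in>A. v \<alpha> * mon (z i) \<alpha>)^2)"
  proof (rule sum.cong[OF refl])
    fix i
    have "(\<Sum>\<alpha>\<in>A. v \<alpha> * mon (z i) \<alpha>)^2 = (\<Sum>\<alpha>\<in>A. \<Sum>\<gamma>\<in>A. (v \<alpha> * mon (z i) \<alpha>) * (v \<gamma> * mon (z i) \<gamma>))"
      by (simp only: power2_eq_square sum_product)
    then show "(\<Sum>\<alpha>\<in>A. \<Sum>\<gamma>\<in>A. w i * g i * ((v \<alpha> * mon (z i) \<alpha>) * (v \<gamma> * mon (z i) \<gamma>))) = w i * g i * (\<Sum>\<alpha>\<in>A. v \<alpha> * mon (z i) \<alpha>)^2"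
      by (simp only: sum_distrib_left)
  qed
  finally show ?thesis .
qed

lemma psd_atoms:
  assumes "\<And>v. (\<Sum>i\<in>I. w i * g i * (\<Sum>\<alpha>\<in>{\<alpha>. tdeg \<alpha> \<le> m}. v \<alpha> * mon (z i) \<alpha>)^2) \<ge> 0"
  shows "psd_idx m (\<lambda>\<alpha> \<gamma>. \<Sum>i\<in>I. w i * g i * mon (z i) \<alpha> * mon (z i) \<gamma>)"
  unfolding psd_idx_def form_atoms using assms by blast

lemma line_q:
  "(\<Sum>\<alpha>\<in>{\<alpha>. tdeg \<alpha> \<le> d}. v \<alpha> * mon (0,s) \<alpha>) = (\<Sum>j\<le>d. v (0,j) * s ^ j)"
proof -
  have "(\<Sum>\<alpha>\<in>{\<alpha>. tdeg \<alpha> \<le> d}. v \<alpha> * mon (0,s) \<alpha>) = (\<Sum>\<alpha>\<in>(\<lambda>j. (0,j)) ` {..d}. v \<alpha> * mon (0,s) \<alpha>)"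
    by (rule sum.mono_neutral_right[OF finite_tdeg]) (auto simp: tdeg_def mon_def)
  also have "\<dots> = (\<Sum>j\<le>d. v (0,j) * s ^ j)"
    by (subst sum.reindex) (auto simp: inj_on_def mon_def)
  finally show ?thesis .
qed


definition tn :: "nat \<Rightarrow> real" where "tn i = -(real i + 1)"
definition Dn :: "nat \<Rightarrow> nat \<Rightarrow> real" where "Dn d i = 1 / (\<Prod>r\<in>{..d}-{i}. (tn i - tn r))"
definition lw :: "nat \<Rightarrow> nat \<Rightarrow> real \<Rightarrow> real" where
  "lw d i \<tau> = (\<Prod>r\<in>{..d}-{i}. (\<tau> - tn r)) * Dn d i"

lemma tn_inj: "tn i = tn r \<longleftrightarrow> i = r" by (simp add: tn_def)

lemma interp:
  "(\<Sum>j\<le>d. c j * \<tau>^j) = (\<Sum>i\<le>d. lw d i \<tau> * (\<Sum>j\<le>d. c j * tn i ^ j))"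
proof -
  define Pc :: "real poly" where "Pc = (\<Sum>j\<le>d. monom (c j) j)"
  have pPc: "poly Pc x = (\<Sum>j\<le>d. c j * x^j)" for x
    unfolding Pc_def by (simp add: poly_sum poly_monom)
  have dPc: "degree Pc \<le> d" unfolding Pc_def
    by (rule degree_sum_le) (auto intro: order.trans[OF degree_monom_le])
  define L :: "real poly" where
    "L = (\<Sum>i\<le>d. smult (Dn d i * poly Pc (tn i)) (\<Prod>r\<in>{..d}-{i}. [:- tn r, 1:]))"
  have pL: "poly L x = (\<Sum>i\<le>d. Dn d i * poly Pc (tn i) * (\<Prod>r\<in>{..d}-{i}. (x - tn r)))" for x
    unfolding L_def by (simp add: poly_sum poly_prod)
  have dL: "degree L \<le> d" unfolding L_def
  proof (rule degree_sum_le)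
    fix i assume "i \<in> {..d}"
    have "degree (\<Prod>r\<in>{..d}-{i}. [:- tn r, 1:]) \<le> sum (degree \<circ> (\<lambda>r. [:- tn r, 1:])) ({..d}-{i})"
      by (rule degree_prod_sum_le) simp
    also have "\<dots> = card ({..d}-{i})" by simp
    also have "\<dots> \<le> d" using \<open>i \<in> {..d}\<close> by simp
    finally show "degree (smult (Dn d i * poly Pc (tn i)) (\<Prod>r\<in>{..d}-{i}. [:- tn r, 1:])) \<le> d"
      using degree_smult_le order.trans by blast
  qed simp
  have agree: "poly Pc x = poly L x" if xin: "x \<in> tn ` {..d}" for x
  proof -
    obtain k where k0: "x = tn k" "k \<in> {..d}" using xin by (rule imageE)
    then have k: "k \<le> d" "x = tn k" by simp_all
    have "poly L x = (\<Sum>i\<le>d. if i = k then poly Pc (tn k) else 0)"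
      unfolding pL
    proof (intro sum.cong refl)
      fix i assume i: "i \<in> {..d}"
      show "Dn d i * poly Pc (tn i) * (\<Prod>r\<in>{..d}-{i}. (x - tn r)) = (if i = k then poly Pc (tn k) else 0)"
      proof (cases "i = k")
        case True
        have "(\<Prod>r\<in>{..d}-{i}. (tn i - tn r)) \<noteq> 0" by (auto simp: tn_inj)
        then show ?thesis using True k by (simp add: Dn_def)
      next
        case False
        then have "(\<Prod>r\<in>{..d}-{i}. (x - tn r)) = 0" using k by (auto intro!: bexI[of _ k])
        then show ?thesis using False by simp
      qed
    qed
    also have "\<dots> = poly Pc x" using k by simp
    finally show ?thesis by simp
  qed
  have card: "card (tn ` {..d}) = Suc d"
    by (subst card_image) (auto simp: inj_on_def tn_inj)
  have "Pc = L" by (rule poly_eqI_degree[OF agree]) (use card dPc dL in auto)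
  then have "poly Pc \<tau> = poly L \<tau>" by simp
  then show ?thesis unfolding pPc pL
    by (simp add: lw_def pPc mult_ac)
qed


lemma line_exists:
  "\<exists>\<tau> \<beta>. \<tau> > 0 \<and> \<beta> \<ge> 0 \<and> \<tau> - \<beta> * (\<Sum>i\<le>d. (real i + 1)) > 0 \<and>
     (\<forall>c. \<tau>^3 * (\<Sum>j\<le>d. c j * \<tau>^j)^2 \<le> \<beta> * (\<Sum>i\<le>d. (real i + 1)^3 * (\<Sum>j\<le>d. c j * tn i ^ j)^2))"
proof -
  define S where "S = (\<Sum>i\<le>d. (real i + 1))"
  define \<Lambda> where "\<Lambda> = (\<lambda>\<tau>. \<Sum>i\<le>d. (lw d i \<tau>)^2)"
  have "((\<lambda>\<tau>. \<tau>^2 * \<Lambda> \<tau> * S) \<longlongrightarrow> 0^2 * \<Lambda> 0 * S) (at_right 0)"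
    unfolding \<Lambda>_def lw_def by (intro tendsto_intros)
  then have "((\<lambda>\<tau>. \<tau>^2 * \<Lambda> \<tau> * S) \<longlongrightarrow> 0) (at_right 0)" by simp
  then have "eventually (\<lambda>\<tau>. \<tau>^2 * \<Lambda> \<tau> * S < 1) (at_right 0)"
    by (rule order_tendstoD(2)) simp
  then obtain b where b: "b > 0" "\<And>y. y > 0 \<Longrightarrow> y < b \<Longrightarrow> y^2 * \<Lambda> y * S < 1"
    unfolding eventually_at_right_field by auto
  define \<tau> where "\<tau> = b / 2"
  have t0: "\<tau> > 0" and t1: "\<tau>^2 * \<Lambda> \<tau> * S < 1" using b unfolding \<tau>_def by auto
  define \<beta> where "\<beta> = \<tau>^3 * \<Lambda> \<tau>"
  have L0: "\<Lambda> \<tau> \<ge> 0" unfolding \<Lambda>_def by (intro sum_nonneg) auto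
  have b0: "\<beta> \<ge> 0" unfolding \<beta>_def using t0 L0 by simp
  have "\<tau> - \<beta> * S = \<tau> * (1 - \<tau>^2 * \<Lambda> \<tau> * S)" unfolding \<beta>_def by (simp add: algebra_simps power3_eq_cube power2_eq_square)
  also have "\<dots> > 0" using t0 t1 by (intro mult_pos_pos) auto
  finally have m0: "\<tau> - \<beta> * S > 0" .
  have ineq: "\<tau>^3 * (\<Sum>j\<le>d. c j * \<tau>^j)^2 \<le> \<beta> * (\<Sum>i\<le>d. (real i + 1)^3 * (\<Sum>j\<le>d. c j * tn i ^ j)^2)" for c
  proof -
    define Q where "Q = (\<lambda>i. \<Sum>j\<le>d. c j * tn i ^ j)"
    have "(\<Sum>j\<le>d. c j * \<tau>^j)^2 = (\<Sum>i\<le>d. lw d i \<tau> * Q i)^2" unfolding Q_def by (subst interp[of c \<tau> d]) (rule refl)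
    also have "\<dots> \<le> \<Lambda> \<tau> * (\<Sum>i\<le>d. (Q i)^2)" unfolding \<Lambda>_def by (rule Cauchy_Schwarz_ineq_sum)
    also have "\<dots> \<le> \<Lambda> \<tau> * (\<Sum>i\<le>d. (real i + 1)^3 * (Q i)^2)"
    proof (rule mult_left_mono[OF sum_mono L0])
      fix i assume "i \<in> {..d}"
      have "1 \<le> (real i + 1)^3" by (rule one_le_power) simp
      then show "(Q i)^2 \<le> (real i + 1)^3 * (Q i)^2" using mult_right_mono[of 1 "(real i + 1)^3" "(Q i)^2"] by simp
    qed
    finally have "\<tau>^3 * (\<Sum>j\<le>d. c j * \<tau>^j)^2 \<le> \<tau>^3 * (\<Lambda> \<tau> * (\<Sum>i\<le>d. (real i + 1)^3 * (Q i)^2))"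
      by (rule mult_left_mono) (use t0 in simp)
    then show ?thesis unfolding \<beta>_def Q_def by (simp add: mult_ac)
  qed
  show ?thesis using t0 b0 m0 ineq unfolding S_def by blast
qed


lemma sumI: "(\<Sum>i\<le>Suc (Suc d). f i) = (\<Sum>i\<le>d. f i) + f (Suc d) + (f (Suc (Suc d)) :: real)"
  by simp

lemma sum_tn: "(\<Sum>i\<le>d. tn i) = - (\<Sum>i\<le>d. (real i + 1))"
  unfolding tn_def by (rule sum_negf)

lemma tn_cube: "tn i ^ 3 = -((real i + 1)^3)"
  unfolding tn_def by (rule power_minus_odd) simp

lemma Omega_sup:
  assumes k2: "k \<ge> 2" and x0: "fst x \<ge> 0"
  shows "x \<in> Omega k Gcusp"
proof -
  define d where "d = k - 2"
  have kd: "k = Suc (Suc d)" using k2 unfolding d_def by simp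
  define S where "S = (\<Sum>i\<le>d. (real i + 1))"
  obtain \<tau> \<beta> where t0: "\<tau> > 0" and b0: "\<beta> \<ge> 0" and m0: "\<tau> - \<beta> * S > 0"
    and ineq: "\<And>c. \<tau>^3 * (\<Sum>j\<le>d. c j * \<tau>^j)^2 \<le> \<beta> * (\<Sum>i\<le>d. (real i + 1)^3 * (\<Sum>j\<le>d. c j * tn i ^ j)^2)"
    using line_exists[of d] unfolding S_def by blast
  define m where "m = \<tau> - \<beta> * S"
  define W where "W = 1 + (real d + 1) * \<beta>"
  have W0: "W > 0" unfolding W_def using b0 by (simp add: add_pos_nonneg)
  define \<theta> where "\<theta> = 1 / (2 * W)"
  have th0: "\<theta> > 0" unfolding \<theta>_def using W0 by simp
  have thW: "\<theta> * W = 1/2" unfolding \<theta>_def using W0 by simp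
  define lam where "lam = (\<bar>snd x\<bar> + 1) / (\<theta> * m)"
  have m0': "m > 0" using m0 unfolding m_def .
  have lam0: "lam > 0" unfolding lam_def using th0 m0' by (simp add: add_pos_nonneg)
  have lam_m: "\<theta> * lam * m = \<bar>snd x\<bar> + 1" unfolding lam_def using th0 m0' by simp
  define P where "P = (2 * fst x, 2 * snd x - 2 * (\<bar>snd x\<bar> + 1))"
  define z where "z = (\<lambda>i. if i \<le> d then (0, lam * tn i) else if i = Suc d then (0, lam * \<tau>) else P)"
  define w where "w = (\<lambda>i. if i \<le> d then \<theta> * \<beta> else if i = Suc d then \<theta> else 1/2)"
  define y where "y = (\<lambda>\<alpha>. \<Sum>i\<le>Suc (Suc d). w i * mon (z i) \<alpha>)"
  have zl: "z i = (0, lam * tn i)" "w i = \<theta> * \<beta>" if "i \<le> d" for i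
    using that by (auto simp: z_def w_def)
  have zS: "z (Suc d) = (0, lam * \<tau>)" "w (Suc d) = \<theta>" by (auto simp: z_def w_def)
  have zSS: "z (Suc (Suc d)) = P" "w (Suc (Suc d)) = 1/2" by (auto simp: z_def w_def)
  have w0: "w i \<ge> 0" for i using th0 b0 by (auto simp: w_def)
  have fz0: "fst (z i) \<ge> 0" for i using x0 by (auto simp: z_def P_def)
  have Ly1: "Ly y (const2 1) = 1"
  proof -
    have "Ly y (const2 1) = y (0,0)"
    proof -
      have "supp2 (const2 1) = {(0,0)}" by (rule supp_const2) simp
      then show ?thesis unfolding Ly_def by (simp add: const2_def)
    qed
    also have "\<dots> = (\<Sum>i\<le>d. \<theta> * \<beta>) + \<theta> + 1/2"
      unfolding y_def sumI by (simp add: zl zS zSS mon_def)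
    also have "\<dots> = \<theta> * W + 1/2" by (simp add: W_def algebra_simps)
    finally show ?thesis using thW by simp
  qed
  have y10: "y (1,0) = fst x"
  proof -
    have "y (1,0) = (\<Sum>i\<le>d. w i * fst (z i)) + w (Suc d) * fst (z (Suc d)) + w (Suc (Suc d)) * fst (z (Suc (Suc d)))"
      unfolding y_def sumI by (simp add: mon_def)
    also have "\<dots> = fst x" by (simp add: zl zS zSS P_def)
    finally show ?thesis .
  qed
  have y01: "y (0,1) = snd x"
  proof -
    have "y (0,1) = (\<Sum>i\<le>d. w i * snd (z i)) + w (Suc d) * snd (z (Suc d)) + w (Suc (Suc d)) * snd (z (Suc (Suc d)))"
      unfolding y_def sumI by (simp add: mon_def)
    also have "(\<Sum>i\<le>d. w i * snd (z i)) = (\<Sum>i\<le>d. \<theta> * \<beta> * lam * tn i)"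
      by (intro sum.cong refl) (simp add: zl)
    also have "\<dots> = - \<theta> * \<beta> * lam * S"
      by (simp add: sum_distrib_left[symmetric] sum_tn S_def)
    finally have "y (0,1) = - \<theta> * \<beta> * lam * S + \<theta> * (lam * \<tau>) + (snd x - (\<bar>snd x\<bar> + 1))"
      by (simp add: zS zSS P_def)
    also have "\<dots> = \<theta> * lam * m + snd x - (\<bar>snd x\<bar> + 1)" by (simp add: m_def algebra_simps)
    also have "\<dots> = snd x" using lam_m by simp
    finally show ?thesis .
  qed
  have pm: "psd_idx k (moment_mat y)"
  proof -
    have "moment_mat y = (\<lambda>\<alpha> \<gamma>. \<Sum>i\<le>Suc (Suc d). w i * 1 * mon (z i) \<alpha> * mon (z i) \<gamma>)"
      unfolding y_def by (intro ext moment_atoms)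
    moreover have "psd_idx k (\<lambda>\<alpha> \<gamma>. \<Sum>i\<le>Suc (Suc d). w i * 1 * mon (z i) \<alpha> * mon (z i) \<gamma>)"
      by (rule psd_atoms) (intro sum_nonneg mult_nonneg_nonneg w0, auto)
    ultimately show ?thesis by simp
  qed
  have pX: "psd_idx (k - dhalf X1) (loc_mat X1 y)"
  proof -
    have "loc_mat X1 y = (\<lambda>\<alpha> \<gamma>. \<Sum>i\<le>Suc (Suc d). w i * eval2 X1 (z i) * mon (z i) \<alpha> * mon (z i) \<gamma>)"
      unfolding y_def by (intro ext loc_atoms)
    moreover have "psd_idx (k - dhalf X1) (\<lambda>\<alpha> \<gamma>. \<Sum>i\<le>Suc (Suc d). w i * eval2 X1 (z i) * mon (z i) \<alpha> * mon (z i) \<gamma>)"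
      by (rule psd_atoms) (intro sum_nonneg mult_nonneg_nonneg w0, auto simp: eval_X1 fz0)
    ultimately show ?thesis by simp
  qed
  have pC: "psd_idx (k - dhalf cusp) (loc_mat cusp y)"
  proof -
    have "loc_mat cusp y = (\<lambda>\<alpha> \<gamma>. \<Sum>i\<le>Suc (Suc d). w i * eval2 cusp (z i) * mon (z i) \<alpha> * mon (z i) \<gamma>)"
      unfolding y_def by (intro ext loc_atoms)
    moreover have "k - dhalf cusp = d" using kd by (simp add: dhalf_cusp)
    moreover have "psd_idx d (\<lambda>\<alpha> \<gamma>. \<Sum>i\<le>Suc (Suc d). w i * eval2 cusp (z i) * mon (z i) \<alpha> * mon (z i) \<gamma>)"
    proof (rule psd_atoms)
      fix v :: "nat \<times> nat \<Rightarrow> real"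
      define c where "c = (\<lambda>j. v (0,j) * lam ^ j)"
      define q where "q = (\<lambda>i. \<Sum>\<alpha>\<in>{\<alpha>. tdeg \<alpha> \<le> d}. v \<alpha> * mon (z i) \<alpha>)"
      have ql: "q i = (\<Sum>j\<le>d. c j * tn i ^ j)" if "i \<le> d" for i
        unfolding q_def zl(1)[OF that] line_q c_def by (simp add: power_mult_distrib mult_ac)
      have qS: "q (Suc d) = (\<Sum>j\<le>d. c j * \<tau> ^ j)"
        unfolding q_def zS(1) line_q c_def by (simp add: power_mult_distrib mult_ac)
      have gl: "eval2 cusp (z i) = lam^3 * (real i + 1)^3" if "i \<le> d" for i
        using that by (simp add: zl eval_cusp tn_cube power_mult_distrib)
      have gS: "eval2 cusp (z (Suc d)) = - (lam^3 * \<tau>^3)"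
        by (simp add: zS eval_cusp power_mult_distrib)
      have gSS: "eval2 cusp (z (Suc (Suc d))) \<ge> 0"
      proof -
        define e where "e = 2 * snd x - 2 * (\<bar>snd x\<bar> + 1)"
        have "e \<le> 0" unfolding e_def by simp
        then have e3: "e^3 \<le> 0" by (simp add: power_le_zero_eq)
        have "eval2 cusp (z (Suc (Suc d))) = (2 * fst x)^2 - e^3"
          unfolding zSS eval_cusp P_def e_def by simp
        then show ?thesis using e3 zero_le_power2[of "2 * fst x"] by linarith
      qed
      have A: "(\<Sum>i\<le>d. w i * eval2 cusp (z i) * (q i)^2) = \<theta> * lam^3 * (\<beta> * (\<Sum>i\<le>d. (real i + 1)^3 * (\<Sum>j\<le>d. c j * tn i ^ j)^2))"
      proof -
        have "(\<Sum>i\<le>d. w i * eval2 cusp (z i) * (q i)^2) = (\<Sum>i\<le>d. \<theta> * lam^3 * (\<beta> * ((real i + 1)^3 * (\<Sum>j\<le>d. c j * tn i ^ j)^2)))"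
          by (intro sum.cong refl) (simp add: zl(2) gl ql)
        then show ?thesis by (simp add: sum_distrib_left)
      qed
      have B: "w (Suc d) * eval2 cusp (z (Suc d)) * (q (Suc d))^2 = - (\<theta> * lam^3 * (\<tau>^3 * (\<Sum>j\<le>d. c j * \<tau> ^ j)^2))"
        by (simp add: zS(2) gS qS)
      have AB: "(\<Sum>i\<le>d. w i * eval2 cusp (z i) * (q i)^2) + w (Suc d) * eval2 cusp (z (Suc d)) * (q (Suc d))^2 \<ge> 0"
      proof -
        have "\<theta> * lam^3 * (\<tau>^3 * (\<Sum>j\<le>d. c j * \<tau> ^ j)^2) \<le> \<theta> * lam^3 * (\<beta> * (\<Sum>i\<le>d. (real i + 1)^3 * (\<Sum>j\<le>d. c j * tn i ^ j)^2))"
          by (rule mult_left_mono[OF ineq[of c]]) (use th0 lam0 in simp)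
        then show ?thesis unfolding A B by linarith
      qed
      have C: "w (Suc (Suc d)) * eval2 cusp (z (Suc (Suc d))) * (q (Suc (Suc d)))^2 \<ge> 0"
        using gSS w0 by simp
      show "(\<Sum>i\<le>Suc (Suc d). w i * eval2 cusp (z i) * (\<Sum>\<alpha>\<in>{\<alpha>. tdeg \<alpha> \<le> d}. v \<alpha> * mon (z i) \<alpha>)^2) \<ge> 0"
        using AB C unfolding sumI q_def by linarith
    qed
    ultimately show ?thesis by simp
  qed
  show ?thesis unfolding Omega_def
    using Ly1 y10 y01 pm pX pC by (auto simp: Gcusp_def)
qed


theorem mainTheorem16:
  shows "(\<forall>k::nat. k \<ge> 1 \<longrightarrow> TH k Gcusp = {x. fst x \<ge> 0})
       \<and> (\<forall>k::nat. k \<ge> 2 \<longrightarrow> closure (Omega k Gcusp) = {x. fst x \<ge> 0})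
       \<and> convex hull Scusp = Scusp
       \<and> Scusp \<noteq> {x. fst x \<ge> 0}"
proof (intro conjI allI impI)
  fix k :: nat assume "k \<ge> 1" then show "TH k Gcusp = {x. fst x \<ge> 0}" by (rule TH_part)
next
  fix k :: nat assume k2: "k \<ge> 2"
  have cl: "closed {x::real \<times> real. 0 \<le> fst x}" by (intro closed_Collect_le continuous_intros)
  show "closure (Omega k Gcusp) = {x. fst x \<ge> 0}"
  proof
    show "closure (Omega k Gcusp) \<subseteq> {x. fst x \<ge> 0}"
      by (rule closure_minimal[OF Omega_sub cl]) (use k2 in simp)
    show "{x. fst x \<ge> 0} \<subseteq> closure (Omega k Gcusp)"
      using Omega_sup[OF k2] closure_subset by blast
  qed
next
  show "convex hull Scusp = Scusp" by (rule hull_part)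
next
  show "Scusp \<noteq> {x. fst x \<ge> 0}" by (rule neq_part)
qed

end
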